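(* Let $(S,E,I,R^{\mathrm T},R^{\mathrm P},D)$ be a solution of the SEIR$^{\mathrm T}$R$^{\mathrm P}$D system with distributed delays described in the context, where $\gamma\ge 0$, $\mu\ge 0$, $p\in[0,1]$ are constants and $\beta(t)\ge 0$ for all $t$. Assume the history data $S(s)=c_S>0$ and $I(s)=c_I>0$ for all $s\le 0$, and the initial data $E(0)=\beta_0 c_I c_S\int_\theta^L \Psi(\tau)\tau\,d\tau$, $R^{\mathrm T}(0)=c_I p\gamma\int_\epsilon^M\Phi(\rho)\rho\,d\rho$, $R^{\mathrm P}(0)=(1-p)\gamma c_I\int_\theta^L\Psi(\tau)\tau\,d\tau$. Then $S(t)$, $E(t)$, $I(t)$, $R^{\mathrm T}(t)$ and $R^{\mathrm P}(t)$ are non-negative for all $t>0$.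
   Context: The system is $S'(t)=-\beta(t)I(t)S(t)+p\gamma\int_{0}^{\infty}I(t-\rho)\Phi(\rho)\,d\rho$, $E'(t)=\beta(t)I(t)S(t)-\int_{0}^{\infty}\beta(t-\tau)I(t-\tau)S(t-\tau)\Psi(\tau)\,d\tau$, $I'(t)=\int_{0}^{\infty}\beta(t-\tau)I(t-\tau)S(t-\tau)\Psi(\tau)\,d\tau-\gamma I(t)-\mu I(t)$, $R^{\mathrm T\prime}(t)=p\gamma I(t)-p\gamma\int_{0}^{\infty}I(t-\rho)\Phi(\rho)\,d\rho$, $R^{\mathrm P\prime}(t)=(1-p)\gamma I(t)$, $D'(t)=\mu I(t)$, for $t>0$. Here $\Psi,\Phi$ are non-negative Lebesgue integrable probability densities on $[0,\infty)$ ($\int\Psi=\int\Phi=1$) with $\operatorname{supp}\Psi\subset[\theta,L]$ for some $0<\theta<L<\infty$ and $\operatorname{supp}\Phi\subset[\epsilon,M]$ for some $0<\epsilon<M<\infty$. The contact rate $\beta$ is a non-negative smooth function on $\mathbb R$, and $\beta_0$ denotes its (constant) value on the history interval, i.e. $\beta(s)=\beta_0$ for $s\le 0$. $S$ and $I$ are continuous on $\mathbb R$ (given by the history data for $s\le 0$). *)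

theory Defs
  imports "HOL-Analysis.Analysis"
begin

definition smooth_real :: "(real \<Rightarrow> real) \<Rightarrow> bool" where
  "smooth_real f \<longleftrightarrow> (\<forall>n. \<forall>x. ((deriv ^^ n) f) differentiable (at x))"

definition delay_density :: "(real \<Rightarrow> real) \<Rightarrow> real \<Rightarrow> real \<Rightarrow> bool" where
  "delay_density f a b \<longleftrightarrow>
     (\<forall>x\<ge>0. f x \<ge> 0) \<and> set_integrable lborel {0..} f \<and>
     (LINT x:{0..}|lborel. f x) = 1 \<and>
     (\<forall>x\<ge>0. x \<notin> {a..b} \<longrightarrow> f x = 0)"

end

theory Submission
  imports Defs
begin

lemma antideriv:
  fixes g :: "real \<Rightarrow> real"
  assumes "continuous_on UNIV g"
  obtains H where "\<And>x. (H has_real_derivative g x) (at x)"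
proof -
  have "\<exists>F. \<forall>x::real. -\<infinity> < ereal x \<longrightarrow> ereal x < \<infinity> \<longrightarrow> (F has_vector_derivative g x) (at x)"
    by (rule einterval_antiderivative) (use assms in \<open>auto simp: continuous_on_eq_continuous_at\<close>)
  then show ?thesis using that by (auto simp: has_real_derivative_iff_has_vector_derivative)
qed

lemma set_integrable_mult_cont:
  fixes w f :: "real \<Rightarrow> real"
  assumes w: "set_integrable lborel {a..b} w" and f: "continuous_on {a..b} f"
  shows "set_integrable lborel {a..b} (\<lambda>x. w x * f x)"
proof -
  have "bounded (f ` {a..b})"
    by (rule compact_imp_bounded[OF compact_continuous_image[OF f compact_Icc]])
  then obtain B where B0: "\<forall>x\<in>{a..b}. \<bar>f x\<bar> \<le> B"
    by (auto simp: bounded_real)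
  then have B: "\<And>x. x \<in> {a..b} \<Longrightarrow> \<bar>f x\<bar> \<le> B" by blast
  have iw: "integrable lborel (\<lambda>x. indicator {a..b} x *\<^sub>R w x)"
    using w by (simp add: set_integrable_def)
  have m1: "(\<lambda>x. indicator {a..b} x *\<^sub>R w x) \<in> borel_measurable lborel"
    using iw by (rule borel_measurable_integrable)
  have m2: "(\<lambda>x. indicator {a..b} x *\<^sub>R f x) \<in> borel_measurable lborel"
    using borel_measurable_continuous_on_indicator[OF _ f] by simp
  have eq: "(\<lambda>x. indicator {a..b} x *\<^sub>R (w x * f x)) = (\<lambda>x. (indicator {a..b} x *\<^sub>R w x) * (indicator {a..b} x *\<^sub>R f x))"
    by (auto simp: indicator_def fun_eq_iff)
  show ?thesis
    unfolding set_integrable_def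
  proof (rule Bochner_Integration.integrable_bound[where f="\<lambda>x. B * (indicator {a..b} x *\<^sub>R w x)"])
    show "integrable lborel (\<lambda>x. B * (indicator {a..b} x *\<^sub>R w x))"
      using iw by simp
    show "(\<lambda>x. indicator {a..b} x *\<^sub>R (w x * f x)) \<in> borel_measurable lborel"
      unfolding eq using m1 m2 by simp
    show "AE x in lborel. norm (indicator {a..b} x *\<^sub>R (w x * f x)) \<le> norm (B * (indicator {a..b} x *\<^sub>R w x))"
    proof (rule AE_I2)
      fix x show "norm (indicator {a..b} x *\<^sub>R (w x * f x)) \<le> norm (B * (indicator {a..b} x *\<^sub>R w x))"
      proof (cases "x \<in> {a..b}")
        case True
        then have "\<bar>f x\<bar> \<le> B" by (rule B)
        then have "\<bar>w x\<bar> * \<bar>f x\<bar> \<le> \<bar>w x\<bar> * \<bar>B\<bar>" by (intro mult_left_mono) auto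
        then show ?thesis using True by (simp add: abs_mult mult.commute)
      qed simp
    qed
  qed
qed

lemma set_int_nonneg:
  fixes f :: "'a \<Rightarrow> real"
  assumes "\<And>x. x \<in> A \<Longrightarrow> 0 \<le> f x"
  shows "0 \<le> (LINT x:A|M. f x)"
  unfolding set_lebesgue_integral_def using assms
  by (intro Bochner_Integration.integral_nonneg) (auto simp: indicator_def)

lemma deriv_under:
  fixes w H g :: "real \<Rightarrow> real"
  assumes w: "set_integrable lborel {a..b} w" and wnn: "\<And>x. x \<in> {a..b} \<Longrightarrow> 0 \<le> w x"
    and H: "\<And>x. (H has_real_derivative g x) (at x)" and g: "continuous_on UNIV g"
  shows "((\<lambda>s. LINT \<tau>:{a..b}|lborel. w \<tau> * H (s - \<tau>)) has_real_derivative
            (LINT \<tau>:{a..b}|lborel. w \<tau> * g (t - \<tau>))) (at t)"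
proof -
  define Q where "Q s = (LINT \<tau>:{a..b}|lborel. w \<tau> * H (s - \<tau>))" for s
  define D where "D = (LINT \<tau>:{a..b}|lborel. w \<tau> * g (t - \<tau>))"
  define W where "W = (LINT \<tau>:{a..b}|lborel. w \<tau>)"
  have W0: "0 \<le> W" unfolding W_def using wnn by (intro set_int_nonneg) auto
  have Hc: "continuous_on UNIV H"
    using H by (meson DERIV_isCont continuous_at_imp_continuous_on)
  have intH: "set_integrable lborel {a..b} (\<lambda>\<tau>. w \<tau> * H (s - \<tau>))" for s
  proof (rule set_integrable_mult_cont[OF w])
    show "continuous_on {a..b} (\<lambda>\<tau>. H (s - \<tau>))"
      by (intro continuous_on_compose2[OF Hc] continuous_intros) auto
  qed
  have intg: "set_integrable lborel {a..b} (\<lambda>\<tau>. w \<tau> * g (s - \<tau>))" for s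
  proof (rule set_integrable_mult_cont[OF w])
    show "continuous_on {a..b} (\<lambda>\<tau>. g (s - \<tau>))"
      by (intro continuous_on_compose2[OF g] continuous_intros) auto
  qed
  have key: "\<exists>d>0. \<forall>y. y \<noteq> t \<and> dist y t < d \<longrightarrow> dist ((Q y - Q t) / (y - t)) D < e"
    if e: "e > 0" for e
  proof -
    define e' where "e' = e / (2 * (W + 1))"
    have e': "e' > 0" using e W0 by (simp add: e'_def)
    define C where "C = {t - b - 1 .. t - a + 1}"
    have "uniformly_continuous_on C g"
      unfolding C_def by (rule compact_uniformly_continuous[OF continuous_on_subset[OF g]]) auto
    then obtain d' where d': "d' > 0" "\<And>x x'. x \<in> C \<Longrightarrow> x' \<in> C \<Longrightarrow> dist x' x < d' \<Longrightarrow> dist (g x') (g x) < e'"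
      using e' unfolding uniformly_continuous_on_def by metis
    define d where "d = min d' 1"
    have "\<forall>y. y \<noteq> t \<and> dist y t < d \<longrightarrow> dist ((Q y - Q t) / (y - t)) D < e"
    proof (intro allI impI)
      fix y assume y: "y \<noteq> t \<and> dist y t < d"
      then have yt: "\<bar>y - t\<bar> < d'" "\<bar>y - t\<bar> < 1" "\<bar>y - t\<bar> > 0"
        by (auto simp: d_def dist_real_def)
      have pt: "\<bar>w \<tau> * (H (y - \<tau>) - H (t - \<tau>) - (y - t) * g (t - \<tau>))\<bar> \<le> w \<tau> * (e' * \<bar>y - t\<bar>)"
        if \<tau>: "\<tau> \<in> {a..b}" for \<tau>
      proof -
        define f where "f s = H s - s * g (t - \<tau>)" for s
        let ?S = "closed_segment (t - \<tau>) (y - \<tau>)"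
        have Sin: "z \<in> C \<and> dist z (t - \<tau>) < d'" if "z \<in> ?S" for z
          using that \<tau> yt unfolding closed_segment_eq_real_ivl C_def
          by (auto simp: dist_real_def split: if_splits)
        have "norm (f (y - \<tau>) - f (t - \<tau>)) \<le> e' * norm ((y - \<tau>) - (t - \<tau>))"
        proof (rule field_differentiable_bound[where f' = "\<lambda>s. g s - g (t - \<tau>)"])
          show "convex ?S" by simp
          show "(f has_field_derivative g z - g (t - \<tau>)) (at z within ?S)" for z
          proof -
            have "(H has_real_derivative g z) (at z within ?S)" by (rule has_field_derivative_at_within[OF H])
            then show ?thesis unfolding f_def by (auto intro!: derivative_eq_intros)
          qed
          show "norm (g z - g (t - \<tau>)) \<le> e'" if "z \<in> ?S" for z
          proof -
            have "t - \<tau> \<in> C" using \<tau> unfolding C_def by auto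
            then have "dist (g z) (g (t - \<tau>)) < e'"
              using d'(2)[of "t - \<tau>" z] Sin[OF that] by auto
            then show ?thesis by (simp add: dist_norm)
          qed
        qed auto
        then have "\<bar>H (y - \<tau>) - H (t - \<tau>) - (y - t) * g (t - \<tau>)\<bar> \<le> e' * \<bar>y - t\<bar>"
          by (simp add: f_def algebra_simps)
        moreover have "0 \<le> w \<tau>" using wnn \<tau> by auto
        ultimately show ?thesis by (simp add: abs_mult mult_left_mono)
      qed
      have eqi: "Q y - Q t - (y - t) * D =
          (LINT \<tau>:{a..b}|lborel. w \<tau> * (H (y - \<tau>) - H (t - \<tau>) - (y - t) * g (t - \<tau>)))"
      proof -
        have "(LINT \<tau>:{a..b}|lborel. w \<tau> * (H (y - \<tau>) - H (t - \<tau>) - (y - t) * g (t - \<tau>)))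
          = (LINT \<tau>:{a..b}|lborel. (w \<tau> * H (y - \<tau>) - w \<tau> * H (t - \<tau>)) - (y - t) * (w \<tau> * g (t - \<tau>)))"
          by (simp add: algebra_simps)
        also have "\<dots> = (LINT \<tau>:{a..b}|lborel. (w \<tau> * H (y - \<tau>) - w \<tau> * H (t - \<tau>))) - (y - t) * D"
          unfolding D_def using intH intg by (subst set_integral_diff(2)) auto
        also have "\<dots> = Q y - Q t - (y - t) * D"
          unfolding Q_def using intH by (subst set_integral_diff(2)) auto
        finally show ?thesis by simp
      qed
      have intd: "set_integrable lborel {a..b} (\<lambda>\<tau>. w \<tau> * (H (y - \<tau>) - H (t - \<tau>) - (y - t) * g (t - \<tau>)))"
      proof (rule set_integrable_mult_cont[OF w])
        show "continuous_on {a..b} (\<lambda>\<tau>. H (y - \<tau>) - H (t - \<tau>) - (y - t) * g (t - \<tau>))"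
          by (intro continuous_on_compose2[OF Hc] continuous_on_compose2[OF g] continuous_intros) auto
      qed
      have intb: "set_integrable lborel {a..b} (\<lambda>\<tau>. w \<tau> * (e' * \<bar>y - t\<bar>))"
        by (rule set_integrable_mult_cont[OF w]) auto
      have intb': "set_integrable lborel {a..b} (\<lambda>\<tau>. - (w \<tau> * (e' * \<bar>y - t\<bar>)))"
        using set_integrable_mult_cont[OF w, of "\<lambda>_. - (e' * \<bar>y - t\<bar>)"] by simp
      have Wb: "(LINT \<tau>:{a..b}|lborel. w \<tau> * (e' * \<bar>y - t\<bar>)) = W * (e' * \<bar>y - t\<bar>)"
        unfolding W_def by simp
      have up: "(LINT \<tau>:{a..b}|lborel. w \<tau> * (H (y - \<tau>) - H (t - \<tau>) - (y - t) * g (t - \<tau>))) \<le> W * (e' * \<bar>y - t\<bar>)"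
        unfolding Wb[symmetric] by (rule set_integral_mono[OF intd intb]) (use pt in \<open>force simp: abs_le_iff\<close>)
      have lo: "- (W * (e' * \<bar>y - t\<bar>)) \<le> (LINT \<tau>:{a..b}|lborel. w \<tau> * (H (y - \<tau>) - H (t - \<tau>) - (y - t) * g (t - \<tau>)))"
      proof -
        have "(LINT \<tau>:{a..b}|lborel. - (w \<tau> * (e' * \<bar>y - t\<bar>))) \<le> (LINT \<tau>:{a..b}|lborel. w \<tau> * (H (y - \<tau>) - H (t - \<tau>) - (y - t) * g (t - \<tau>)))"
          by (rule set_integral_mono[OF intb' intd]) (use pt in \<open>force simp: abs_le_iff\<close>)
        moreover have "(LINT \<tau>:{a..b}|lborel. - (w \<tau> * (e' * \<bar>y - t\<bar>))) = - (W * (e' * \<bar>y - t\<bar>))"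
          using Wb set_integral_uminus[OF intb] by simp
        ultimately show ?thesis by simp
      qed
      have "\<bar>Q y - Q t - (y - t) * D\<bar> \<le> W * e' * \<bar>y - t\<bar>"
        using up lo eqi by (simp add: abs_le_iff mult.assoc)
      then have "\<bar>(Q y - Q t) / (y - t) - D\<bar> \<le> W * e'"
        using yt(3) by (simp add: field_simps abs_divide) 
      also have "W * e' < e"
        using e W0 unfolding e'_def by (simp add: field_simps add_nonneg_pos mult_nonneg_nonneg add_pos_nonneg)
      finally show "dist ((Q y - Q t) / (y - t)) D < e" by (simp add: dist_real_def)
    qed
    moreover have "d > 0" using d' by (simp add: d_def)
    ultimately show ?thesis by blast
  qed
  show ?thesis
    unfolding has_field_derivative_iff tendsto_iff eventually_at
    using key by (simp add: Q_def D_def)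
qed


lemma conv_nonneg:
  fixes X g \<Psi> :: "real \<Rightarrow> real" and \<theta> L g0 t :: real
  assumes \<theta>L: "0 < \<theta>" "\<theta> < L" and \<Psi>: "delay_density \<Psi> \<theta> L"
    and g: "continuous_on UNIV g" and gnn: "\<And>s. 0 \<le> g s" and ghist: "\<And>s. s \<le> 0 \<Longrightarrow> g s = g0"
    and Xc: "continuous_on {0..} X"
    and dX: "\<And>t. t > 0 \<Longrightarrow> (X has_real_derivative (g t - (LINT \<tau>:{0..}|lborel. g (t - \<tau>) * \<Psi> \<tau>))) (at t)"
    and X0: "X 0 = g0 * (LINT \<tau>:{\<theta>..L}|lborel. \<Psi> \<tau> * \<tau>)"
    and t: "0 \<le> t"
  shows "X t \<ge> 0"
proof -
  have \<Psi>nn: "\<And>x. x \<ge> 0 \<Longrightarrow> \<Psi> x \<ge> 0" and \<Psi>i: "set_integrable lborel {0..} \<Psi>"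
    and \<Psi>1: "(LINT x:{0..}|lborel. \<Psi> x) = 1" and \<Psi>z: "\<And>x. x \<ge> 0 \<Longrightarrow> x \<notin> {\<theta>..L} \<Longrightarrow> \<Psi> x = 0"
    using \<Psi> unfolding delay_density_def by auto
  have \<Psi>i': "set_integrable lborel {\<theta>..L} \<Psi>"
    by (rule set_integrable_subset[OF \<Psi>i]) (use \<theta>L in auto)
  have \<Psi>nn': "\<And>x. x \<in> {\<theta>..L} \<Longrightarrow> 0 \<le> \<Psi> x" using \<Psi>nn \<theta>L by auto
  have restrict: "(LINT \<tau>:{0..}|lborel. f \<tau> * \<Psi> \<tau>) = (LINT \<tau>:{\<theta>..L}|lborel. \<Psi> \<tau> * f \<tau>)" for f
    unfolding set_lebesgue_integral_def
  proof (rule Bochner_Integration.integral_cong[OF refl])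
    fix x show "indicator {0..} x *\<^sub>R (f x * \<Psi> x) = indicator {\<theta>..L} x *\<^sub>R (\<Psi> x * f x)"
      using \<Psi>z[of x] \<theta>L by (auto simp: indicator_def)
  qed
  have \<Psi>1': "(LINT x:{\<theta>..L}|lborel. \<Psi> x) = 1"
    using restrict[of "\<lambda>_. 1"] \<Psi>1 by simp
  obtain H where H: "\<And>x. (H has_real_derivative g x) (at x)"
    using antideriv[OF g] by blast
  have Hc: "continuous_on UNIV H"
    using H by (meson DERIV_isCont continuous_at_imp_continuous_on)
  define K where "K s = (LINT \<tau>:{\<theta>..L}|lborel. \<Psi> \<tau> * H (s - \<tau>))" for s
  define F where "F s = (LINT \<tau>:{\<theta>..L}|lborel. \<Psi> \<tau> * (H s - H (s - \<tau>)))" for s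
  have Feq: "F s = H s - K s" for s
  proof -
    have i1: "set_integrable lborel {\<theta>..L} (\<lambda>\<tau>. \<Psi> \<tau> * H s)"
      by (rule set_integrable_mult_cont[OF \<Psi>i']) auto
    have i2: "set_integrable lborel {\<theta>..L} (\<lambda>\<tau>. \<Psi> \<tau> * H (s - \<tau>))"
      by (rule set_integrable_mult_cont[OF \<Psi>i']) (intro continuous_on_compose2[OF Hc] continuous_intros, auto)
    have "F s = (LINT \<tau>:{\<theta>..L}|lborel. \<Psi> \<tau> * H s - \<Psi> \<tau> * H (s - \<tau>))"
      unfolding F_def by (simp add: algebra_simps)
    also have "\<dots> = (LINT \<tau>:{\<theta>..L}|lborel. \<Psi> \<tau> * H s) - K s"
      unfolding K_def using i1 i2 by (subst set_integral_diff(2)) auto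
    also have "\<dots> = H s - K s" using \<Psi>1' by simp
    finally show ?thesis .
  qed
  have dF: "(F has_real_derivative (g s - (LINT \<tau>:{\<theta>..L}|lborel. \<Psi> \<tau> * g (s - \<tau>)))) (at s)" for s
  proof -
    have "((\<lambda>s. H s - K s) has_real_derivative (g s - (LINT \<tau>:{\<theta>..L}|lborel. \<Psi> \<tau> * g (s - \<tau>)))) (at s)"
      unfolding K_def by (intro DERIV_diff H deriv_under[OF \<Psi>i' \<Psi>nn' H g])
    moreover have "F = (\<lambda>s. H s - K s)" using Feq by auto
    ultimately show ?thesis by simp
  qed
  have Fc: "continuous_on UNIV F"
    using dF by (meson DERIV_isCont continuous_at_imp_continuous_on)
  have F0: "F 0 = X 0"
  proof -
    have "H 0 - H (- \<tau>) = g0 * \<tau>" if "\<tau> \<in> {\<theta>..L}" for \<tau>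
    proof -
      have "(\<lambda>s. H s - g0 * s) 0 = (\<lambda>s. H s - g0 * s) (- \<tau>)"
      proof (rule DERIV_isconst_end[where f="\<lambda>s. H s - g0 * s"])
        show "- \<tau> < 0" using that \<theta>L by auto
        show "continuous_on {- \<tau>..0} (\<lambda>s. H s - g0 * s)"
          by (intro continuous_intros continuous_on_subset[OF Hc]) auto
        show "((\<lambda>s. H s - g0 * s) has_real_derivative 0) (at x)" if "- \<tau> < x" "x < 0" for x
        proof -
          have "((\<lambda>s. H s - g0 * s) has_real_derivative g x - g0) (at x)"
            by (auto intro!: derivative_eq_intros H)
          then show ?thesis using ghist[of x] that by simp
        qed
      qed
      then show ?thesis by (simp add: algebra_simps)
    qed
    then have "F 0 = (LINT \<tau>:{\<theta>..L}|lborel. g0 * (\<Psi> \<tau> * \<tau>))"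
      unfolding F_def by (intro set_lebesgue_integral_cong) auto
    then show ?thesis using X0 by simp
  qed
  have XF: "X t = F t"
  proof (cases "t = 0")
    case True then show ?thesis using F0 by simp
  next
    case False
    have "(\<lambda>s. X s - F s) t = (\<lambda>s. X s - F s) 0"
    proof (rule DERIV_isconst_end[where f="\<lambda>s. X s - F s"])
      show "0 < t" using t False by auto
      show "continuous_on {0..t} (\<lambda>s. X s - F s)"
        by (intro continuous_intros continuous_on_subset[OF Xc] continuous_on_subset[OF Fc]) auto
      show "((\<lambda>s. X s - F s) has_real_derivative 0) (at x)" if "0 < x" "x < t" for x
      proof -
        have "((\<lambda>s. X s - F s) has_real_derivative
           (g x - (LINT \<tau>:{0..}|lborel. g (x - \<tau>) * \<Psi> \<tau>)) - (g x - (LINT \<tau>:{\<theta>..L}|lborel. \<Psi> \<tau> * g (x - \<tau>)))) (at x)"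
          by (intro DERIV_diff dX dF) (use that in auto)
        then show ?thesis using restrict[of "\<lambda>\<tau>. g (x - \<tau>)"] by simp
      qed
    qed
    then show ?thesis using F0 by simp
  qed
  have "F t \<ge> 0"
    unfolding F_def
  proof (rule set_int_nonneg)
    fix \<tau> assume \<tau>: "\<tau> \<in> {\<theta>..L}"
    have "H (t - \<tau>) \<le> H t"
      by (rule DERIV_nonneg_imp_nondecreasing[where f = H]) (use \<tau> \<theta>L H gnn in auto)
    then show "0 \<le> \<Psi> \<tau> * (H t - H (t - \<tau>))" using \<Psi>nn'[OF \<tau>] by simp
  qed
  then show ?thesis using XF by simp
qed


lemma mono_deriv:
  fixes f f' :: "real \<Rightarrow> real"
  assumes "0 \<le> T" "continuous_on {0..T} f"
    and "\<And>s. 0 < s \<Longrightarrow> s < T \<Longrightarrow> (f has_real_derivative f' s) (at s)"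
    and "\<And>s. 0 < s \<Longrightarrow> s < T \<Longrightarrow> f' s \<ge> 0"
  shows "f 0 \<le> f T"
proof (cases "T = 0")
  case False
  then have T: "0 < T" using assms(1) by simp
  obtain l z where z: "0 < z" "z < T" "DERIV f z :> l" "f T - f 0 = (T - 0) * l"
    using MVT[OF T assms(2)] assms(3) real_differentiable_def by meson
  have "l = f' z" using DERIV_unique[OF z(3) assms(3)[OF z(1,2)]] .
  then have "l \<ge> 0" using assms(4)[OF z(1,2)] by simp
  then have "0 \<le> T * l" using T by simp
  then show ?thesis using z(4) by simp
qed simp

lemma pos_growth:
  fixes f f' :: "real \<Rightarrow> real" and K T :: real
  assumes T: "0 < T" and fc: "continuous_on {0..T} f" and f0: "f 0 > 0"
    and df: "\<And>s. 0 < s \<Longrightarrow> s < T \<Longrightarrow> (f has_real_derivative f' s) (at s)"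
    and bd: "\<And>s. 0 < s \<Longrightarrow> s < T \<Longrightarrow> f' s \<ge> - K * f s"
  shows "f T > 0"
proof -
  have "(\<lambda>s. f s * exp (K * s)) 0 \<le> (\<lambda>s. f s * exp (K * s)) T"
  proof (rule mono_deriv[where f' = "\<lambda>s. (f' s + K * f s) * exp (K * s)"])
    show "0 \<le> T" using T by simp
    show "continuous_on {0..T} (\<lambda>s. f s * exp (K * s))"
      by (intro continuous_intros fc)
    show "((\<lambda>s. f s * exp (K * s)) has_real_derivative (f' s + K * f s) * exp (K * s)) (at s)"
      if "0 < s" "s < T" for s
      using df[OF that] by (auto intro!: derivative_eq_intros simp: algebra_simps)
    show "0 \<le> (f' s + K * f s) * exp (K * s)" if "0 < s" "s < T" for s
      using bd[OF that] by simp
  qed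
  then have "0 < f T * exp (K * T)" using f0 by simp
  then show ?thesis by (simp add: zero_less_mult_iff)
qed

theorem theorem1:
  fixes S E I RT RP D \<beta> \<Psi> \<Phi> :: "real \<Rightarrow> real"
    and \<beta>\<^sub>0 \<gamma> \<mu> p \<theta> L \<epsilon> M c\<^sub>S c\<^sub>I :: real
  assumes \<theta>L: "0 < \<theta>" "\<theta> < L"
    and \<epsilon>M: "0 < \<epsilon>" "\<epsilon> < M"
    and \<Psi>: "delay_density \<Psi> \<theta> L"
    and \<Phi>: "delay_density \<Phi> \<epsilon> M"
    and \<beta>_smooth: "smooth_real \<beta>"
    and \<beta>_nonneg: "\<forall>t. \<beta> t \<ge> 0"
    and \<beta>_hist: "\<forall>s\<le>0. \<beta> s = \<beta>\<^sub>0"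
    and params: "\<gamma> \<ge> 0" "\<mu> \<ge> 0" "0 \<le> p" "p \<le> 1"
    and cS: "c\<^sub>S > 0" and cI: "c\<^sub>I > 0"
    and S_hist: "\<forall>s\<le>0. S s = c\<^sub>S"
    and I_hist: "\<forall>s\<le>0. I s = c\<^sub>I"
    and S_cont: "continuous_on UNIV S"
    and I_cont: "continuous_on UNIV I"
    and E_cont: "continuous_on {0..} E"
    and RT_cont: "continuous_on {0..} RT"
    and RP_cont: "continuous_on {0..} RP"
    and D_cont: "continuous_on {0..} D"
    and E0: "E 0 = \<beta>\<^sub>0 * c\<^sub>I * c\<^sub>S * (LINT \<tau>:{\<theta>..L}|lborel. \<Psi> \<tau> * \<tau>)"
    and RT0: "RT 0 = c\<^sub>I * p * \<gamma> * (LINT \<rho>:{\<epsilon>..M}|lborel. \<Phi> \<rho> * \<rho>)"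
    and RP0: "RP 0 = (1 - p) * \<gamma> * c\<^sub>I * (LINT \<tau>:{\<theta>..L}|lborel. \<Psi> \<tau> * \<tau>)"
    and dS: "\<forall>t>0. (S has_real_derivative
               (- \<beta> t * I t * S t
                + p * \<gamma> * (LINT \<rho>:{0..}|lborel. I (t - \<rho>) * \<Phi> \<rho>))) (at t)"
    and dE: "\<forall>t>0. (E has_real_derivative
               (\<beta> t * I t * S t
                - (LINT \<tau>:{0..}|lborel. \<beta> (t - \<tau>) * I (t - \<tau>) * S (t - \<tau>) * \<Psi> \<tau>))) (at t)"
    and dI: "\<forall>t>0. (I has_real_derivative
               ((LINT \<tau>:{0..}|lborel. \<beta> (t - \<tau>) * I (t - \<tau>) * S (t - \<tau>) * \<Psi> \<tau>)
                - \<gamma> * I t - \<mu> * I t)) (at t)"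
    and dRT: "\<forall>t>0. (RT has_real_derivative
               (p * \<gamma> * I t - p * \<gamma> * (LINT \<rho>:{0..}|lborel. I (t - \<rho>) * \<Phi> \<rho>))) (at t)"
    and dRP: "\<forall>t>0. (RP has_real_derivative ((1 - p) * \<gamma> * I t)) (at t)"
    and dD: "\<forall>t>0. (D has_real_derivative (\<mu> * I t)) (at t)"
  shows "\<forall>t>0. S t \<ge> 0 \<and> E t \<ge> 0 \<and> I t \<ge> 0 \<and> RT t \<ge> 0 \<and> RP t \<ge> 0"
proof -
  have \<beta>c: "continuous_on UNIV \<beta>"
  proof -
    have "\<beta> differentiable (at x)" for x
      using \<beta>_smooth unfolding smooth_real_def by (metis funpow_0)
    then show ?thesis
      by (meson continuous_at_imp_continuous_on differentiable_imp_continuous_within)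
  qed
  have \<Psi>nn: "\<And>x. x \<ge> 0 \<Longrightarrow> \<Psi> x \<ge> 0" using \<Psi> unfolding delay_density_def by auto
  have \<Phi>nn: "\<And>x. x \<ge> 0 \<Longrightarrow> \<Phi> x \<ge> 0" using \<Phi> unfolding delay_density_def by auto
  have S0: "S 0 = c\<^sub>S" and I0: "I 0 = c\<^sub>I" using S_hist I_hist by auto
  have pos: "S t > 0 \<and> I t > 0" for t
  proof (rule ccontr)
    assume nt: "\<not> (S t > 0 \<and> I t > 0)"
    have t0: "t > 0"
    proof (rule ccontr)
      assume "\<not> t > 0" then have "t \<le> 0" by simp
      then show False using nt S_hist I_hist cS cI by auto
    qed
    define Z where "Z = {0..t} \<inter> ({s. S s \<le> 0} \<union> {s. I s \<le> 0})"
    have "closed ({s. S s \<le> 0} \<union> {s. I s \<le> 0})"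
      by (intro closed_Un closed_Collect_le S_cont I_cont continuous_on_const)
    then have cZ: "compact Z" unfolding Z_def by (intro compact_Int_closed compact_Icc)
    have "t \<in> Z" using nt t0 unfolding Z_def by auto
    then have nZ: "Z \<noteq> {}" by blast
    obtain T where TZ: "T \<in> Z" and Tmin0: "\<forall>y\<in>Z. T \<le> y"
      using compact_attains_inf[OF cZ nZ] by blast
    have Tmin: "\<And>y. y \<in> Z \<Longrightarrow> T \<le> y" using Tmin0 by blast
    have T0: "T > 0"
    proof -
      have "T \<ge> 0" using TZ unfolding Z_def by auto
      moreover have "T \<noteq> 0" using TZ cS cI S0 I0 unfolding Z_def by auto
      ultimately show ?thesis by simp
    qed
    have before: "S s > 0 \<and> I s > 0" if "s < T" for s
    proof (cases "s \<le> 0")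
      case True then show ?thesis using S_hist I_hist cS cI by auto
    next
      case False
      have "s \<le> t" using that TZ unfolding Z_def by auto
      then have "s \<notin> Z" using Tmin[of s] that by auto
      then show ?thesis using False \<open>s \<le> t\<close> unfolding Z_def by auto
    qed
    have "bounded ((\<lambda>s. \<beta> s * I s) ` {0..T})"
      by (intro compact_imp_bounded compact_continuous_image continuous_intros
          continuous_on_subset[OF \<beta>c] continuous_on_subset[OF I_cont] compact_Icc) auto
    then obtain K where K0: "\<forall>s\<in>{0..T}. \<bar>\<beta> s * I s\<bar> \<le> K"
      by (auto simp: bounded_real)
    have "S T > 0"
    proof (rule pos_growth[OF T0 _ _ _ _, where K = K])
      show "continuous_on {0..T} S" by (rule continuous_on_subset[OF S_cont]) auto
      show "S 0 > 0" using S0 cS by simp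
      show "(S has_real_derivative (- \<beta> s * I s * S s
               + p * \<gamma> * (LINT \<rho>:{0..}|lborel. I (s - \<rho>) * \<Phi> \<rho>))) (at s)"
        if "0 < s" "s < T" for s using dS that by auto
      show "- \<beta> s * I s * S s + p * \<gamma> * (LINT \<rho>:{0..}|lborel. I (s - \<rho>) * \<Phi> \<rho>) \<ge> - K * S s"
        if "0 < s" "s < T" for s
      proof -
        have "0 \<le> (LINT \<rho>:{0..}|lborel. I (s - \<rho>) * \<Phi> \<rho>)"
        proof (rule set_int_nonneg)
          fix \<rho> :: real assume "\<rho> \<in> {0..}"
          then have "I (s - \<rho>) > 0" "\<Phi> \<rho> \<ge> 0" using before[of "s - \<rho>"] \<Phi>nn[of \<rho>] that by auto
          then show "0 \<le> I (s - \<rho>) * \<Phi> \<rho>" by simp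
        qed
        then have a: "0 \<le> p * \<gamma> * (LINT \<rho>:{0..}|lborel. I (s - \<rho>) * \<Phi> \<rho>)"
          using params by simp
        have "s \<in> {0..T}" using that by simp
        then have "\<bar>\<beta> s * I s\<bar> \<le> K" using K0 by blast
        then have "\<beta> s * I s \<le> K" by (rule order_trans[OF abs_ge_self])
        then have "\<beta> s * I s * S s \<le> K * S s"
          using before[of s] that by (intro mult_right_mono) auto
        then show ?thesis using a by simp
      qed
    qed
    moreover have "I T > 0"
    proof (rule pos_growth[OF T0 _ _ _ _, where K = "\<gamma> + \<mu>"])
      show "continuous_on {0..T} I" by (rule continuous_on_subset[OF I_cont]) auto
      show "I 0 > 0" using I0 cI by simp
      show "(I has_real_derivative ((LINT \<tau>:{0..}|lborel. \<beta> (s - \<tau>) * I (s - \<tau>) * S (s - \<tau>) * \<Psi> \<tau>)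
                - \<gamma> * I s - \<mu> * I s)) (at s)"
        if "0 < s" "s < T" for s using dI that by auto
      show "(LINT \<tau>:{0..}|lborel. \<beta> (s - \<tau>) * I (s - \<tau>) * S (s - \<tau>) * \<Psi> \<tau>)
                - \<gamma> * I s - \<mu> * I s \<ge> - (\<gamma> + \<mu>) * I s"
        if "0 < s" "s < T" for s
      proof -
        have "0 \<le> (LINT \<tau>:{0..}|lborel. \<beta> (s - \<tau>) * I (s - \<tau>) * S (s - \<tau>) * \<Psi> \<tau>)"
        proof (rule set_int_nonneg)
          fix \<tau> :: real assume "\<tau> \<in> {0..}"
          then have "I (s - \<tau>) > 0" "S (s - \<tau>) > 0" "\<Psi> \<tau> \<ge> 0" "\<beta> (s - \<tau>) \<ge> 0"
            using before[of "s - \<tau>"] \<Psi>nn[of \<tau>] that \<beta>_nonneg by auto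
          then show "0 \<le> \<beta> (s - \<tau>) * I (s - \<tau>) * S (s - \<tau>) * \<Psi> \<tau>" by simp
        qed
        then show ?thesis by (simp add: algebra_simps)
      qed
    qed
    ultimately show False using TZ unfolding Z_def by auto
  qed
  show ?thesis
  proof (intro allI impI conjI)
    fix t :: real assume t: "t > 0"
    show "S t \<ge> 0" "I t \<ge> 0" using pos[of t] by auto
    show "E t \<ge> 0"
    proof (rule conv_nonneg[OF \<theta>L \<Psi>, of "\<lambda>s. \<beta> s * I s * S s" "\<beta>\<^sub>0 * c\<^sub>I * c\<^sub>S" E t])
      show "continuous_on UNIV (\<lambda>s. \<beta> s * I s * S s)"
        by (intro continuous_intros \<beta>c I_cont S_cont)
      show "0 \<le> \<beta> s * I s * S s" for s using pos[of s] \<beta>_nonneg by simp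
      show "\<beta> s * I s * S s = \<beta>\<^sub>0 * c\<^sub>I * c\<^sub>S" if "s \<le> 0" for s
        using that \<beta>_hist I_hist S_hist by simp
      show "continuous_on {0..} E" by (rule E_cont)
      show "(E has_real_derivative (\<beta> s * I s * S s -
            (LINT \<tau>:{0..}|lborel. \<beta> (s - \<tau>) * I (s - \<tau>) * S (s - \<tau>) * \<Psi> \<tau>))) (at s)"
        if "s > 0" for s using dE that by auto
      show "E 0 = \<beta>\<^sub>0 * c\<^sub>I * c\<^sub>S * (LINT \<tau>:{\<theta>..L}|lborel. \<Psi> \<tau> * \<tau>)" by (rule E0)
      show "0 \<le> t" using t by simp
    qed
    show "RT t \<ge> 0"
    proof (rule conv_nonneg[OF \<epsilon>M \<Phi>, of "\<lambda>s. p * \<gamma> * I s" "p * \<gamma> * c\<^sub>I" RT t])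
      show "continuous_on UNIV (\<lambda>s. p * \<gamma> * I s)"
        by (intro continuous_intros I_cont)
      show "0 \<le> p * \<gamma> * I s" for s using pos[of s] params by simp
      show "p * \<gamma> * I s = p * \<gamma> * c\<^sub>I" if "s \<le> 0" for s
        using that I_hist by simp
      show "continuous_on {0..} RT" by (rule RT_cont)
      show "(RT has_real_derivative (p * \<gamma> * I s -
            (LINT \<rho>:{0..}|lborel. p * \<gamma> * I (s - \<rho>) * \<Phi> \<rho>))) (at s)"
        if "s > 0" for s
      proof -
        have "(LINT \<rho>:{0..}|lborel. p * \<gamma> * I (s - \<rho>) * \<Phi> \<rho>)
             = p * \<gamma> * (LINT \<rho>:{0..}|lborel. I (s - \<rho>) * \<Phi> \<rho>)"
          by (simp add: mult.assoc)
        then show ?thesis using dRT that by auto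
      qed
      show "RT 0 = p * \<gamma> * c\<^sub>I * (LINT \<tau>:{\<epsilon>..M}|lborel. \<Phi> \<tau> * \<tau>)"
        using RT0 by (simp add: ac_simps)
      show "0 \<le> t" using t by simp
    qed
    show "RP t \<ge> 0"
    proof -
      have "0 \<le> (LINT \<tau>:{\<theta>..L}|lborel. \<Psi> \<tau> * \<tau>)"
        by (rule set_int_nonneg) (use \<Psi>nn \<theta>L in auto)
      then have "0 \<le> RP 0" using RP0 params cI by simp
      also have "RP 0 \<le> RP t"
      proof (rule mono_deriv[where f' = "\<lambda>s. (1 - p) * \<gamma> * I s"])
        show "0 \<le> t" using t by simp
        show "continuous_on {0..t} RP" by (rule continuous_on_subset[OF RP_cont]) auto
        show "(RP has_real_derivative (1 - p) * \<gamma> * I s) (at s)" if "0 < s" "s < t" for s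
          using dRP that by auto
        show "0 \<le> (1 - p) * \<gamma> * I s" for s using pos[of s] params by simp
      qed
      finally show ?thesis .
    qed
  qed
qed

end
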